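(* For every positive integer $n$, $$S_n=2\sum_{k=1}^n\binom{n-1}{k-1}\binom{2k}{k}\binom{2n-2k}{n-k}.$$
   Context: $(S_n)_{n\ge0}$ is the integer sequence defined by $S_0=1$, $S_1=4$ and $(n+1)^2S_{n+1}=4(3n^2+3n+1)S_n-32n^2S_{n-1}$ for $n\ge1$; it is known that $S_n=\sum_{k=0}^n\binom nk\binom{2k}k\binom{2n-2k}{n-k}$ for all $n\ge0$. *)

theory Defs
  imports Complex_Main
begin

text \<open>The sequence S defined by S 0 = 1, S 1 = 4 and
  (n+1)^2 S(n+1) = 4(3n^2+3n+1) S n - 32 n^2 S(n-1) for n >= 1,
  written with the index shifted (n := m+1), values taken in the rationals.\<close>
fun S :: "nat \<Rightarrow> rat" where
  "S 0 = 1"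
| "S (Suc 0) = 4"
| "S (Suc (Suc m)) =
     (4 * (3 * (of_nat m + 1)^2 + 3 * (of_nat m + 1) + 1) * S (Suc m)
      - 32 * (of_nat m + 1)^2 * S m) / (of_nat m + 2)^2"

end

theory Submission
  imports Defs
begin


definition Fr :: "nat \<Rightarrow> nat \<Rightarrow> rat" where
  "Fr n k = (if k \<le> n then fact n * fact (2*k) * fact (2*(n-k)) / (fact k ^ 3 * fact (n-k) ^ 3) else 0)"

lemma Fr_binom: "Fr n k = of_nat ((n choose k) * (2*k choose k) * (2*n - 2*k choose (n-k)))"
proof (cases "k \<le> n")
  case True
  have e: "2*n - 2*k = 2*(n-k)" by simp
  have b1: "of_nat (n choose k) = (fact n / (fact k * fact (n-k)) :: rat)"
    using True by (rule binomial_fact)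
  have b2: "of_nat (2*k choose k) = (fact (2*k) / (fact k * fact k) :: rat)"
    using binomial_fact[of k "2*k"] by simp
  have b3: "of_nat (2*(n-k) choose (n-k)) = (fact (2*(n-k)) / (fact (n-k) * fact (n-k)) :: rat)"
    using binomial_fact[of "n-k" "2*(n-k)"] by simp
  show ?thesis using True unfolding Fr_def e of_nat_mult b1 b2 b3
    by (simp add: field_simps power3_eq_cube)
next
  case False
  then show ?thesis by (simp add: Fr_def)
qed

lemma fact1: "fact (m+1) = (of_nat m + 1) * (fact m :: rat)"
  by (simp add: fact_Suc)
lemma fact2: "fact (m+2) = (of_nat m + 2) * (of_nat m + 1) * (fact m :: rat)"
proof -
  have "m+2 = Suc (Suc m)" by simp
  then show ?thesis by (simp only: fact_Suc) (simp add: algebra_simps)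
qed
lemma fact4: "fact (m+4) = (of_nat m + 4) * (of_nat m + 3) * (of_nat m + 2) * (of_nat m + 1) * (fact m :: rat)"
proof -
  have "m+4 = Suc (Suc (Suc (Suc m)))" by simp
  then show ?thesis by (simp only: fact_Suc) (simp add: algebra_simps)
qed

definition P :: "rat \<Rightarrow> rat \<Rightarrow> rat" where
  "P n k = -2 + 4*k + 2*n - 8*n*k + 8*n*k^2 + 4*n^2 - 8*n^2*k"

definition G :: "nat \<Rightarrow> nat \<Rightarrow> rat" where
  "G n k = (if 1 \<le> k \<and> k \<le> n+1 then P (of_nat n) (of_nat k) * Fr n (k-1) / (2*of_nat n - 2*of_nat k + 1) else 0)"

definition L :: "nat \<Rightarrow> nat \<Rightarrow> rat" where
  "L n k = (of_nat n + 1)^2 * Fr (n+1) k - 4*(3*of_nat n^2 + 3*of_nat n + 1) * Fr n k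
     + 32 * of_nat n^2 * Fr (n-1) k"

lemma gen_case: "L (j+r+2) (j+1) = G (j+r+2) (j+2) - G (j+r+2) (j+1)"
proof -
  define J where "J = (of_nat j :: rat)"
  define R where "R = (of_nat r :: rat)"
  have J: "J \<ge> 0" and R: "R \<ge> 0" unfolding J_def R_def by auto
  define a where "a = (fact (j+r+1) :: rat)"
  define b where "b = (fact (2*j) :: rat)"
  define c where "c = (fact (2*r) :: rat)"
  define d where "d = (fact j :: rat)"
  define e where "e = (fact r :: rat)"
  define X where "X = a*b*c/(d^3*e^3)"
  define q1 where "q1 = (J+R+3)*(J+R+2) * ((2*J+2)*(2*J+1)) * ((2*R+4)*(2*R+3)*(2*R+2)*(2*R+1))
       / ((J+1)^3 * ((R+2)*(R+1))^3)"
  define q2 where "q2 = (J+R+2) * ((2*J+2)*(2*J+1)) * ((2*R+2)*(2*R+1)) / ((J+1)^3 * (R+1)^3)"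
  define q3 where "q3 = ((2*J+2)*(2*J+1)) / ((J+1)^3)"
  define q4 where "q4 = (J+R+2) * ((2*R+4)*(2*R+3)*(2*R+2)*(2*R+1)) / (((R+2)*(R+1))^3)"
  have nz: "J+1 \<noteq> 0" "R+1 \<noteq> 0" "R+2 \<noteq> 0" "2*R+1 \<noteq> 0" "2*R+3 \<noteq> 0"
    using J R by auto
  have dz: "d \<noteq> 0" "e \<noteq> 0" unfolding d_def e_def by auto
  have key: "(J+R+3)^2 * q1 - 4*(3*(J+R+2)^2+3*(J+R+2)+1) * q2 + 32*(J+R+2)^2 * q3
     = P (J+R+2) (J+2) * q2 / (2*R+1) - P (J+R+2) (J+1) * q4 / (2*R+3)"
    unfolding q1_def q2_def q3_def q4_def P_def using nz
    by (simp add: divide_simps) algebra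
  have fa1: "fact (j+r+3) = (J+R+3)*(J+R+2)*a"
  proof -
    have eq: "j+r+3 = (j+r+1)+2" by simp
    show ?thesis unfolding eq fact2[of "j+r+1"] a_def[symmetric] J_def R_def by (simp add: algebra_simps)
  qed
  have fa2: "fact (j+r+2) = (J+R+2)*a"
  proof -
    have eq: "j+r+2 = (j+r+1)+1" by simp
    show ?thesis unfolding eq fact1[of "j+r+1"] a_def[symmetric] J_def R_def by (simp add: algebra_simps)
  qed
  have fb: "fact (2*j+2) = (2*J+2)*(2*J+1)*b"
    unfolding fact2[of "2*j"] b_def[symmetric] J_def by (simp add: algebra_simps)
  have fc1: "fact (2*r+4) = (2*R+4)*(2*R+3)*(2*R+2)*(2*R+1)*c"
    unfolding fact4[of "2*r"] c_def[symmetric] R_def by (simp add: algebra_simps)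
  have fc2: "fact (2*r+2) = (2*R+2)*(2*R+1)*c"
    unfolding fact2[of "2*r"] c_def[symmetric] R_def by (simp add: algebra_simps)
  have fd: "fact (j+1) = (J+1)*d" unfolding fact1[of j] d_def[symmetric] J_def by simp
  have fe1: "fact (r+2) = (R+2)*(R+1)*e" unfolding fact2[of r] e_def[symmetric] R_def by simp
  have fe2: "fact (r+1) = (R+1)*e" unfolding fact1[of r] e_def[symmetric] R_def by simp
  note fs = fa1 fa2 fb fc1 fc2 fd fe1 fe2
  have F1: "Fr (j+r+2+1) (j+1) = X * q1"
  proof -
    have c: "j+1 \<le> j+r+2+1" by simp
    have s: "j+r+2+1-(j+1) = r+2" "j+r+3-(j+1) = r+2" "2*(j+1) = 2*j+2" "2*(r+2) = 2*r+4" "j+r+2+1 = j+r+3" by simp_all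
    show ?thesis unfolding Fr_def s using c apply (simp only: c if_True)
      unfolding fs X_def q1_def using nz dz by (simp add: divide_simps) (algebra)?
  qed
  have F2: "Fr (j+r+2) (j+1) = X * q2"
  proof -
    have c: "j+1 \<le> j+r+2" by simp
    have s: "j+r+2-(j+1) = r+1" "2*(j+1) = 2*j+2" "2*(r+1) = 2*r+2" by simp_all
    show ?thesis unfolding Fr_def s apply (simp only: c if_True)
      unfolding fs X_def q2_def using nz dz by (simp add: divide_simps) (algebra)?
  qed
  have F3: "Fr (j+r+2-1) (j+1) = X * q3"
  proof -
    have c: "j+1 \<le> j+r+1" by simp
    have s: "j+r+2-1 = j+r+1" "j+r+1-(j+1) = r" "2*(j+1) = 2*j+2" by simp_all
    show ?thesis unfolding Fr_def s apply (simp only: c if_True)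
      unfolding fs a_def[symmetric] c_def[symmetric] e_def[symmetric] X_def q3_def using nz dz by (simp add: divide_simps) (algebra)?
  qed
  have F4: "Fr (j+r+2) j = X * q4"
  proof -
    have c: "j \<le> j+r+2" by simp
    have s: "j+r+2-j = r+2" "2*(r+2) = 2*r+4" by simp_all
    show ?thesis unfolding Fr_def s apply (simp only: c if_True)
      unfolding fs b_def[symmetric] d_def[symmetric] X_def q4_def using nz dz by (simp add: divide_simps) (algebra)?
  qed
  have nJR: "(of_nat (j+r+2) :: rat) = J+R+2" "(of_nat (j+2) :: rat) = J+2" "(of_nat (j+1) :: rat) = J+1"
    unfolding J_def R_def by simp_all
  have "L (j+r+2) (j+1) = (J+R+3)^2 * (X*q1) - 4*(3*(J+R+2)^2+3*(J+R+2)+1) * (X*q2) + 32*(J+R+2)^2 * (X*q3)"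
    unfolding L_def F1 F2 F3 nJR by (simp add: algebra_simps)
  also have "\<dots> = X * ((J+R+3)^2 * q1 - 4*(3*(J+R+2)^2+3*(J+R+2)+1) * q2 + 32*(J+R+2)^2 * q3)"
    by (simp add: algebra_simps)
  also have "\<dots> = X * (P (J+R+2) (J+2) * q2 / (2*R+1) - P (J+R+2) (J+1) * q4 / (2*R+3))"
    by (simp only: key)
  also have "\<dots> = G (j+r+2) (j+2) - G (j+r+2) (j+1)"
  proof -
    have g1: "G (j+r+2) (j+2) = P (J+R+2) (J+2) * (X*q2) / (2*R+1)"
      unfolding G_def nJR using F2 by (simp add: algebra_simps)
    have g2: "G (j+r+2) (j+1) = P (J+R+2) (J+1) * (X*q4) / (2*R+3)"
      unfolding G_def nJR using F4 by (simp add: algebra_simps)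
    show ?thesis unfolding g1 g2 by (simp add: algebra_simps)
  qed
  finally show ?thesis .
qed

lemma case0: "L (r+1) 0 = G (r+1) 1 - G (r+1) 0"
proof -
  define R where "R = (of_nat r :: rat)"
  have R: "R \<ge> 0" unfolding R_def by auto
  define c where "c = (fact (2*r) :: rat)"
  define e where "e = (fact r :: rat)"
  define X where "X = c/e^2"
  define q1 where "q1 = (2*R+4)*(2*R+3)*(2*R+2)*(2*R+1)/((R+2)*(R+1))^2"
  define q2 where "q2 = (2*R+2)*(2*R+1)/(R+1)^2"
  have nz: "R+1 \<noteq> 0" "R+2 \<noteq> 0" "2*R+1 \<noteq> 0" using R by auto
  have ez: "e \<noteq> 0" unfolding e_def by auto
  have key: "(R+2)^2 * q1 - 4*(3*(R+1)^2+3*(R+1)+1) * q2 + 32*(R+1)^2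
     = P (R+1) 1 * q2 / (2*R+1)"
    unfolding q1_def q2_def P_def using nz by (simp add: divide_simps) (algebra)?
  have fc1: "fact (2*r+4) = (2*R+4)*(2*R+3)*(2*R+2)*(2*R+1)*c"
    unfolding fact4[of "2*r"] c_def[symmetric] R_def by (simp add: algebra_simps)
  have fc2: "fact (2*r+2) = (2*R+2)*(2*R+1)*c"
    unfolding fact2[of "2*r"] c_def[symmetric] R_def by (simp add: algebra_simps)
  have fe1: "fact (r+2) = (R+2)*(R+1)*e" unfolding fact2[of r] e_def[symmetric] R_def by simp
  have fe2: "fact (r+1) = (R+1)*e" unfolding fact1[of r] e_def[symmetric] R_def by simp
  note fs = fc1 fc2 fe1 fe2
  have F1: "Fr (r+1+1) 0 = X * q1"
  proof -
    have s: "r+1+1 = r+2" "r+2-0 = r+2" "2*(r+2) = 2*r+4" by simp_all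
    show ?thesis unfolding Fr_def s fs X_def q1_def using nz ez by (simp add: divide_simps) (algebra)?
  qed
  have F2: "Fr (r+1) 0 = X * q2"
  proof -
    have s: "r+1-0 = r+1" "2*(r+1) = 2*r+2" by simp_all
    show ?thesis unfolding Fr_def s fs X_def q2_def using nz ez by (simp add: divide_simps) (algebra)?
  qed
  have F3: "Fr (r+1-1) 0 = X"
    unfolding Fr_def X_def c_def e_def by (simp add: power2_eq_square power3_eq_cube)
  have nR: "(of_nat (r+1) :: rat) = R+1" unfolding R_def by simp
  have "L (r+1) 0 = (R+2)^2 * (X*q1) - 4*(3*(R+1)^2+3*(R+1)+1) * (X*q2) + 32*(R+1)^2 * X"
    unfolding L_def F1 F2 F3 nR by (simp add: algebra_simps)
  also have "\<dots> = X * ((R+2)^2 * q1 - 4*(3*(R+1)^2+3*(R+1)+1) * q2 + 32*(R+1)^2)"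
    by (simp add: algebra_simps)
  also have "\<dots> = X * (P (R+1) 1 * q2 / (2*R+1))"
    by (simp only: key)
  also have "\<dots> = G (r+1) 1 - G (r+1) 0"
  proof -
    have g1: "G (r+1) 1 = P (R+1) 1 * (X*q2) / (2*R+1)"
      unfolding G_def nR using F2 by (simp add: algebra_simps)
    have g2: "G (r+1) 0 = 0" unfolding G_def by simp
    show ?thesis unfolding g1 g2 by (simp add: algebra_simps)
  qed
  finally show ?thesis .
qed

lemma caseN: "L (j+1) (j+1) = G (j+1) (j+2) - G (j+1) (j+1)"
proof -
  define J where "J = (of_nat j :: rat)"
  have J: "J \<ge> 0" unfolding J_def by auto
  define b where "b = (fact (2*j) :: rat)"
  define d where "d = (fact j :: rat)"
  define X where "X = b/d^2"
  define q1 where "q1 = (J+2)*(J+1)*(2*J+2)*(2*J+1)*2/(J+1)^3"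
  define q2 where "q2 = (2*J+2)*(2*J+1)/(J+1)^2"
  define q4 where "q4 = (J+1)*2"
  have nz: "J+1 \<noteq> 0" "J+2 \<noteq> 0" using J by auto
  have dz: "d \<noteq> 0" unfolding d_def by auto
  have key: "(J+2)^2 * q1 - 4*(3*(J+1)^2+3*(J+1)+1) * q2
     = P (J+1) (J+2) * q2 / (2*(J+1) - 2*(J+2) + 1) - P (J+1) (J+1) * q4 / (2*(J+1) - 2*(J+1) + 1)"
    unfolding q1_def q2_def q4_def P_def using nz by (simp add: divide_simps) (algebra)?
  have fb: "fact (2*j+2) = (2*J+2)*(2*J+1)*b"
    unfolding fact2[of "2*j"] b_def[symmetric] J_def by (simp add: algebra_simps)
  have fd1: "fact (j+1) = (J+1)*d" unfolding fact1[of j] d_def[symmetric] J_def by simp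
  have fd2: "fact (j+2) = (J+2)*(J+1)*d" unfolding fact2[of j] d_def[symmetric] J_def by simp
  note fs = fb fd1 fd2
  have F1: "Fr (j+1+1) (j+1) = X * q1"
  proof -
    have s: "j+1+1 = j+2" "j+2-(j+1) = 1" "2*(j+1) = 2*j+2" by simp_all
    show ?thesis unfolding Fr_def s fs X_def q1_def using nz dz by (simp add: divide_simps) (algebra)?
  qed
  have F2: "Fr (j+1) (j+1) = X * q2"
  proof -
    have s: "2*(j+1) = 2*j+2" by simp_all
    show ?thesis unfolding Fr_def s fs X_def q2_def using nz dz by (simp add: divide_simps) (algebra)?
  qed
  have F3: "Fr (j+1-1) (j+1) = 0" unfolding Fr_def by simp
  have F4: "Fr (j+1) j = X * q4"
  proof -
    have s: "j+1-j = 1" by simp_all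
    show ?thesis unfolding Fr_def s fs b_def[symmetric] d_def[symmetric] X_def q4_def using nz dz by (simp add: divide_simps) (algebra)?
  qed
  have nJ: "(of_nat (j+1) :: rat) = J+1" "(of_nat (j+2) :: rat) = J+2"
    unfolding J_def by simp_all
  have "L (j+1) (j+1) = (J+2)^2 * (X*q1) - 4*(3*(J+1)^2+3*(J+1)+1) * (X*q2)"
    unfolding L_def F1 F2 F3 nJ by (simp add: algebra_simps)
  also have "\<dots> = X * ((J+2)^2 * q1 - 4*(3*(J+1)^2+3*(J+1)+1) * q2)"
    by (simp add: algebra_simps)
  also have "\<dots> = X * (P (J+1) (J+2) * q2 / (2*(J+1) - 2*(J+2) + 1) - P (J+1) (J+1) * q4 / (2*(J+1) - 2*(J+1) + 1))"
    by (simp only: key)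
  also have "\<dots> = G (j+1) (j+2) - G (j+1) (j+1)"
  proof -
    have g1: "G (j+1) (j+2) = P (J+1) (J+2) * (X*q2) / (2*(J+1) - 2*(J+2) + 1)"
      unfolding G_def nJ using F2 by (simp add: algebra_simps)
    have g2: "G (j+1) (j+1) = P (J+1) (J+1) * (X*q4) / (2*(J+1) - 2*(J+1) + 1)"
      unfolding G_def nJ using F4 by (simp add: algebra_simps)
    show ?thesis unfolding g1 g2 by (simp add: algebra_simps)
  qed
  finally show ?thesis .
qed

lemma caseN1: "L (j+1) (j+2) = G (j+1) (j+3) - G (j+1) (j+2)"
proof -
  define J where "J = (of_nat j :: rat)"
  have J: "J \<ge> 0" unfolding J_def by auto
  define b where "b = (fact (2*j) :: rat)"
  define d where "d = (fact j :: rat)"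
  define X where "X = b/d^2"
  define q1 where "q1 = (2*J+4)*(2*J+3)*(2*J+2)*(2*J+1)/((J+2)*(J+1))^2"
  define q2 where "q2 = (2*J+2)*(2*J+1)/(J+1)^2"
  have nz: "J+1 \<noteq> 0" "J+2 \<noteq> 0" using J by auto
  have dz: "d \<noteq> 0" unfolding d_def by auto
  have key: "(J+2)^2 * q1
     = 0 - P (J+1) (J+2) * q2 / (2*(J+1) - 2*(J+2) + 1)"
    unfolding q1_def q2_def P_def using nz by (simp add: divide_simps) (algebra)?
  have fb: "fact (2*j+2) = (2*J+2)*(2*J+1)*b"
    unfolding fact2[of "2*j"] b_def[symmetric] J_def by (simp add: algebra_simps)
  have fb2: "fact (2*j+4) = (2*J+4)*(2*J+3)*(2*J+2)*(2*J+1)*b"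
    unfolding fact4[of "2*j"] b_def[symmetric] J_def by (simp add: algebra_simps)
  have fd1: "fact (j+1) = (J+1)*d" unfolding fact1[of j] d_def[symmetric] J_def by simp
  have fd2: "fact (j+2) = (J+2)*(J+1)*d" unfolding fact2[of j] d_def[symmetric] J_def by simp
  note fs = fb fb2 fd1 fd2
  have F1: "Fr (j+1+1) (j+2) = X * q1"
  proof -
    have s: "j+1+1 = j+2" "2*(j+2) = 2*j+4" by simp_all
    show ?thesis unfolding Fr_def s fs X_def q1_def using nz dz by (simp add: divide_simps) (algebra)?
  qed
  have F2: "Fr (j+1) (j+1) = X * q2"
  proof -
    have s: "2*(j+1) = 2*j+2" by simp_all
    show ?thesis unfolding Fr_def s fs X_def q2_def using nz dz by (simp add: divide_simps) (algebra)?
  qed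
  have F3: "Fr (j+1-1) (j+2) = 0" "Fr (j+1) (j+2) = 0" unfolding Fr_def by simp_all
  have nJ: "(of_nat (j+1) :: rat) = J+1" "(of_nat (j+2) :: rat) = J+2"
    unfolding J_def by simp_all
  have "L (j+1) (j+2) = (J+2)^2 * (X*q1)"
    unfolding L_def F1 F3 nJ by (simp add: algebra_simps)
  also have "\<dots> = X * ((J+2)^2 * q1)"
    by (simp add: algebra_simps)
  also have "\<dots> = X * (0 - P (J+1) (J+2) * q2 / (2*(J+1) - 2*(J+2) + 1))"
    by (simp only: key)
  also have "\<dots> = G (j+1) (j+3) - G (j+1) (j+2)"
  proof -
    have g1: "G (j+1) (j+2) = P (J+1) (J+2) * (X*q2) / (2*(J+1) - 2*(J+2) + 1)"
      unfolding G_def nJ using F2 by (simp add: algebra_simps)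
    have g2: "G (j+1) (j+3) = 0" unfolding G_def by simp
    show ?thesis unfolding g1 g2 by (simp add: algebra_simps)
  qed
  finally show ?thesis .
qed

lemma local_id:
  assumes "1 \<le> n" "k \<le> n+1"
  shows "L n k = G n (k+1) - G n k"
proof -
  consider "k = 0" | "k = n+1" | "k = n" "k \<ge> 1" | "1 \<le> k" "k < n" using assms by linarith
  then show ?thesis
  proof cases
    case 1
    obtain r where "n = r+1" using assms(1) by (cases n) auto
    then show ?thesis using case0[of r] 1 by simp
  next
    case 2
    obtain j where "n = j+1" using assms(1) by (cases n) auto
    then show ?thesis using caseN1[of j] 2 by (simp add: add.assoc numeral_3_eq_3)
  next
    case 3
    obtain j where "n = j+1" using assms(1) by (cases n) auto
    then show ?thesis using caseN[of j] 3 by (simp add: add.assoc)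
  next
    case 4
    obtain j where j: "k = j+1" using 4 by (cases k) auto
    obtain r where "n = Suc (k + r)" using less_imp_Suc_add[OF 4(2)] by blast
    then have "n = j+r+2" using j by simp
    then show ?thesis using gen_case[of j r] j by (simp add: add.assoc)
  qed
qed

definition T :: "nat \<Rightarrow> rat" where "T n = (\<Sum>k<Suc n. Fr n k)"

lemma sum_Fr_ext: "n < M \<Longrightarrow> (\<Sum>k<M. Fr n k) = T n"
proof (induction M)
  case 0 then show ?case by simp
next
  case (Suc M)
  show ?case
  proof (cases "n < M")
    case True
    then have "Fr n M = 0" by (simp add: Fr_def)
    then show ?thesis using Suc True by simp
  next
    case False
    then have "M = n" using Suc by simp
    then show ?thesis by (simp add: T_def)
  qed
qed

lemma T_rec:
  assumes "1 \<le> n"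
  shows "(of_nat n + 1)^2 * T (n+1) - 4*(3*of_nat n^2 + 3*of_nat n + 1) * T n + 32 * of_nat n^2 * T (n-1) = 0"
proof -
  have "(\<Sum>k<n+2. L n k) = (\<Sum>k<n+2. G n (Suc k) - G n k)"
    using local_id[OF assms] by (intro sum.cong) auto
  also have "\<dots> = G n (n+2) - G n 0" by (rule sum_lessThan_telescope)
  also have "\<dots> = 0" by (simp add: G_def)
  finally have z: "(\<Sum>k<n+2. L n k) = 0" .
  have "(\<Sum>k<n+2. L n k) = (of_nat n + 1)^2 * (\<Sum>k<n+2. Fr (n+1) k)
      - 4*(3*of_nat n^2 + 3*of_nat n + 1) * (\<Sum>k<n+2. Fr n k) + 32 * of_nat n^2 * (\<Sum>k<n+2. Fr (n-1) k)"
    unfolding L_def sum.distrib sum_subtractf sum_distrib_left ..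
  also have "\<dots> = (of_nat n + 1)^2 * T (n+1) - 4*(3*of_nat n^2 + 3*of_nat n + 1) * T n + 32 * of_nat n^2 * T (n-1)"
  proof -
    have s1: "(\<Sum>k<n+2. Fr (n+1) k) = T (n+1)" by (rule sum_Fr_ext) simp
    have s2: "(\<Sum>k<n+2. Fr n k) = T n" by (rule sum_Fr_ext) simp
    have s3: "(\<Sum>k<n+2. Fr (n-1) k) = T (n-1)" by (rule sum_Fr_ext) simp
    show ?thesis by (simp only: s1 s2 s3)
  qed
  finally show ?thesis using z by simp
qed



lemma comb_id:
  fixes m :: nat
  defines "a \<equiv> \<lambda>k::nat. 2*k choose k"
  shows "(\<Sum>k<Suc (Suc m). (Suc m choose k) * a k * a (Suc m - k))
       = 2 * (\<Sum>k=1..Suc m. (m choose (k-1)) * a k * a (Suc m - k))"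
proof -
  define B where "B = (\<Sum>j<Suc m. (m choose j) * a (Suc j) * a (m - j))"
  have R: "(\<Sum>k=1..Suc m. (m choose (k-1)) * a k * a (Suc m - k)) = B"
  proof -
    have "(\<Sum>k=1..Suc m. (m choose (k-1)) * a k * a (Suc m - k))
        = (\<Sum>j=0..m. (m choose j) * a (Suc j) * a (m - j))"
      unfolding One_nat_def sum.shift_bounds_cl_Suc_ivl by simp
    also have "\<dots> = B" unfolding B_def by (simp add: atLeast0AtMost lessThan_Suc_atMost)
    finally show ?thesis .
  qed
  have refl: "(\<Sum>k<Suc m. (m choose k) * a k * a (Suc m - k)) = B"
  proof -
    have "(\<Sum>k<Suc m. (m choose k) * a k * a (Suc m - k))
        = (\<Sum>i<Suc m. (m choose (m - i)) * a (m - i) * a (Suc m - (m - i)))"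
      by (subst sum.nat_diff_reindex[symmetric]) simp
    also have "\<dots> = B" unfolding B_def
    proof (rule sum.cong)
      fix i assume "i \<in> {..<Suc m}"
      then have i: "i \<le> m" by simp
      then have "m choose (m - i) = m choose i" by (simp add: binomial_symmetric[symmetric])
      moreover have "Suc m - (m - i) = Suc i" using i by simp
      ultimately show "(m choose (m - i)) * a (m - i) * a (Suc m - (m - i)) = (m choose i) * a (Suc i) * a (m - i)"
        by simp
    qed simp
    finally show ?thesis .
  qed
  have e1: "(\<Sum>k<Suc (Suc m). (Suc m choose k) * a k * a (Suc m - k))
      = a (Suc m) + (\<Sum>j<Suc m. (Suc m choose Suc j) * a (Suc j) * a (m - j))"
    by (subst sum.lessThan_Suc_shift) (simp add: a_def)
  have e2: "(\<Sum>j<Suc m. (Suc m choose Suc j) * a (Suc j) * a (m - j)) = B + (\<Sum>j<Suc m. (m choose Suc j) * a (Suc j) * a (m - j))"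
    unfolding B_def by (simp add: sum.distrib algebra_simps)
  have e3: "a (Suc m) + (\<Sum>j<Suc m. (m choose Suc j) * a (Suc j) * a (m - j))
      = (\<Sum>k<Suc (Suc m). (m choose k) * a k * a (Suc m - k))"
    by (subst sum.lessThan_Suc_shift) (simp add: a_def)
  have e4: "(\<Sum>k<Suc (Suc m). (m choose k) * a k * a (Suc m - k)) = (\<Sum>k<Suc m. (m choose k) * a k * a (Suc m - k))"
    by (subst sum.lessThan_Suc) simp
  show ?thesis using R refl e1 e2 e3 e4 by linarith
qed

lemma S_eq_T: "S n = T n"
proof (induction n rule: S.induct)
  case 1 then show ?case by (simp add: T_def Fr_def)
next
  case 2 then show ?case by (simp add: T_def Fr_def numeral_2_eq_2)
next
  case (3 m)
  define x where "x = (of_nat m :: rat)"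
  have x: "x \<ge> 0" unfolding x_def by simp
  have r: "(x + 2)^2 * T (Suc (Suc m)) - 4*(3*(x+1)^2 + 3*(x+1) + 1) * T (Suc m) + 32 * (x+1)^2 * T m = 0"
    using T_rec[of "Suc m"] unfolding x_def by (simp add: add.commute add.left_commute)
  have nz: "x + 2 \<noteq> 0" using x by simp
  have "T (Suc (Suc m)) = (4*(3*(x+1)^2 + 3*(x+1) + 1) * T (Suc m) - 32 * (x+1)^2 * T m) / (x+2)^2"
    using r nz by (simp add: field_simps)
  moreover have "S (Suc (Suc m)) = (4*(3*(x+1)^2 + 3*(x+1) + 1) * S (Suc m) - 32*(x+1)^2*S m)/(x+2)^2"
    unfolding x_def by (simp only: S.simps)
  ultimately show ?case using 3 by (simp only:)
qed



theorem lemma2p7: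
  fixes n :: nat
  assumes "n \<ge> 1"
  shows "S n = 2 * (\<Sum>k = 1..n. of_nat ((n - 1 choose (k - 1)) * (2 * k choose k)
                                   * (2 * n - 2 * k choose (n - k))))"
proof -
  obtain m where n: "n = Suc m" using assms by (cases n) auto
  define a where "a = (\<lambda>k::nat. 2*k choose k)"
  have ak: "\<And>k. (2 * n - 2 * k choose (n - k)) = a (n - k)"
  proof -
    fix k have "2 * n - 2 * k = 2 * (n - k)" by simp
    then show "(2 * n - 2 * k choose (n - k)) = a (n - k)" unfolding a_def by simp
  qed
  have "S n = T n" by (rule S_eq_T)
  also have "\<dots> = (\<Sum>k<Suc n. of_nat ((n choose k) * (2*k choose k) * (2*n - 2*k choose (n-k))))"
    unfolding T_def Fr_binom ..
  also have "\<dots> = of_nat (\<Sum>k<Suc (Suc m). (Suc m choose k) * a k * a (Suc m - k))"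
    unfolding of_nat_sum ak unfolding n a_def ..
  also have "\<dots> = of_nat (2 * (\<Sum>k=1..Suc m. (m choose (k-1)) * a k * a (Suc m - k)))"
    unfolding a_def by (subst comb_id) (rule refl)
  also have "\<dots> = 2 * (\<Sum>k = 1..n. of_nat ((n - 1 choose (k - 1)) * (2 * k choose k)
                                   * (2 * n - 2 * k choose (n - k))))"
    unfolding of_nat_mult of_nat_sum ak unfolding n diff_Suc_1 a_def of_nat_numeral ..
  finally show ?thesis .
qed



end
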